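(* The vertical extension $(X^*,\mathcal L^*,d^* )$ of a reduced Birkhoff--Beatley system $(X,\mathcal L,d)$ is a reduced Birkhoff--Beatley system.
   Context: A reduced Birkhoff--Beatley system is a triple $(X,\mathcal L,d)$ where $X$ is a set with at least two elements (points), $\mathcal L$ is a family of subsets of $X$ (lines), and $d\colon X^2\to\mathbb R$ is a function (metric), such that: (i) any two distinct points of $X$ lie in a unique line of $\mathcal L$; (ii) for each $\ell\in\mathcal L$ there is a bijection $c\colon\mathbb R\to\ell$ (a ruler) with $d(c(t),c(s))=|t-s|$ for all $s,t$. The vertical extension of $(X,\mathcal L,d)$ is $(X^*,\mathcal L^*,d^* )$ where $X^*=X\times\mathbb R$, $d^*((x_0,y_0),(x_1,y_1))=\sqrt{d(x_0,x_1)^2+(y_0-y_1)^2}$, and $\mathcal L^*$ consists of the following lines, one for each pair of distinct points $(x_0,y_0)\ne(x_1,y_1)$ of $X^*$: if $x_0\neq x_1$, let $\ell\in\mathcal L$ be the line through $x_0,x_1$, $c\colon\mathbb R\to\ell$ a ruler with $c(s_0)=x_0$, $c(s_1)=x_1$, $a:=((s_0-s_1)^2+(y_0-y_1)^2)^{-1/2}$, and the line is $\{c^*(t)\mid t\in\mathbb R\}$ with $c^*(t)=\bigl(c(at(s_1-s_0)+s_0),\,at(y_1-y_0)+y_0\bigr)$; if $x_0=x_1$ (so $y_0\neq y_1$), the line is $\{x_0\}\times\mathbb R$. *)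

theory Defs
  imports Main "HOL-Analysis.Analysis"
begin

definition is_ruler :: "('a \<Rightarrow> 'a \<Rightarrow> real) \<Rightarrow> 'a set \<Rightarrow> (real \<Rightarrow> 'a) \<Rightarrow> bool" where
  "is_ruler d l c \<longleftrightarrow> bij_betw c UNIV l \<and> (\<forall>s t. d (c t) (c s) = \<bar>t - s\<bar>)"

definition reduced_BB_system :: "'a set \<Rightarrow> 'a set set \<Rightarrow> ('a \<Rightarrow> 'a \<Rightarrow> real) \<Rightarrow> bool" where
  "reduced_BB_system X L d \<longleftrightarrow>
     (\<exists>x\<in>X. \<exists>y\<in>X. x \<noteq> y) \<and>
     (\<forall>l\<in>L. l \<subseteq> X) \<and>
     (\<forall>x\<in>X. \<forall>y\<in>X. x \<noteq> y \<longrightarrow> (\<exists>!l. l \<in> L \<and> x \<in> l \<and> y \<in> l)) \<and>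
     (\<forall>l\<in>L. \<exists>c. is_ruler d l c)"

definition vext_points :: "'a set \<Rightarrow> ('a \<times> real) set" where
  "vext_points X = X \<times> (UNIV :: real set)"

definition vext_metric :: "('a \<Rightarrow> 'a \<Rightarrow> real) \<Rightarrow> ('a \<times> real) \<Rightarrow> ('a \<times> real) \<Rightarrow> real" where
  "vext_metric d p q = sqrt ((d (fst p) (fst q))\<^sup>2 + (snd p - snd q)\<^sup>2)"

definition vext_lines :: "'a set \<Rightarrow> 'a set set \<Rightarrow> ('a \<Rightarrow> 'a \<Rightarrow> real) \<Rightarrow> ('a \<times> real) set set" where
  "vext_lines X L d = {m. \<exists>x0 y0 x1 y1. x0 \<in> X \<and> x1 \<in> X \<and> (x0, y0) \<noteq> (x1, y1) \<and>
     (if x0 \<noteq> x1 then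
        (\<exists>l c s0 s1. l \<in> L \<and> x0 \<in> l \<and> x1 \<in> l \<and> is_ruler d l c \<and> c s0 = x0 \<and> c s1 = x1 \<and>
           (let a = 1 / sqrt ((s0 - s1)\<^sup>2 + (y0 - y1)\<^sup>2) in
             m = range (\<lambda>t. (c (a * t * (s1 - s0) + s0), a * t * (y1 - y0) + y0))))
      else m = {x0} \<times> (UNIV :: real set))}"

end

theory Submission
  imports Defs
begin

lemma ruler_inj:
  assumes "is_ruler d l c" shows "inj c"
proof (rule injI)
  fix t s assume "c t = c s"
  have "\<bar>t - s\<bar> = d (c t) (c s)" using assms unfolding is_ruler_def by simp
  also have "\<dots> = d (c t) (c t)" using \<open>c t = c s\<close> by simp
  also have "\<dots> = 0" using assms unfolding is_ruler_def by simp
  finally show "t = s" by simp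
qed

lemma ruler_range:
  assumes "is_ruler d l c" shows "range c = l"
  using assms unfolding is_ruler_def by (simp add: bij_betw_def)

lemma ruler_change:
  assumes r1: "is_ruler d l c1" and r2: "is_ruler d l c2"
  shows "\<exists>\<sigma> b. \<sigma>\<^sup>2 = 1 \<and> (\<forall>t. c2 t = c1 (\<sigma> * t + b))"
proof -
  define \<phi> where "\<phi> t = inv_into UNIV c1 (c2 t)" for t
  have c1phi: "c1 (\<phi> t) = c2 t" for t
  proof -
    have "c2 t \<in> l" using ruler_range[OF r2] by auto
    hence "c2 t \<in> range c1" using ruler_range[OF r1] by simp
    thus ?thesis unfolding \<phi>_def by (simp add: f_inv_into_f)
  qed
  have iso: "\<bar>\<phi> t - \<phi> s\<bar> = \<bar>t - s\<bar>" for t s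
  proof -
    have "\<bar>\<phi> t - \<phi> s\<bar> = d (c1 (\<phi> t)) (c1 (\<phi> s))" using r1 unfolding is_ruler_def by simp
    also have "\<dots> = d (c2 t) (c2 s)" by (simp add: c1phi)
    also have "\<dots> = \<bar>t - s\<bar>" using r2 unfolding is_ruler_def by simp
    finally show ?thesis .
  qed
  define b where "b = \<phi> 0"
  define \<sigma> where "\<sigma> = \<phi> 1 - b"
  have sq: "(\<phi> t - b)\<^sup>2 = t\<^sup>2" for t
    using iso[of t 0] unfolding b_def by (metis diff_zero power2_abs)
  have s1: "\<sigma>\<^sup>2 = 1" using sq[of 1] unfolding \<sigma>_def by simp
  have "\<phi> t = \<sigma> * t + b" for t
  proof -
    have e: "(\<phi> t - \<phi> 1)\<^sup>2 = (t - 1)\<^sup>2" using iso[of t 1] by (metis power2_abs)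
    have "(\<phi> t - \<phi> 1) = (\<phi> t - b) - \<sigma>" unfolding \<sigma>_def by simp
    hence "((\<phi> t - b) - \<sigma>)\<^sup>2 = (t - 1)\<^sup>2" using e by metis
    hence "(\<phi> t - b)\<^sup>2 - 2 * (\<phi> t - b) * \<sigma> + \<sigma>\<^sup>2 = t\<^sup>2 - 2 * t + 1"
      by (simp add: power2_diff)
    hence "(\<phi> t - b) * \<sigma> = t" using sq[of t] s1 by (simp add: algebra_simps)
    hence "(\<phi> t - b) * \<sigma> * \<sigma> = t * \<sigma>" by simp
    moreover have "\<sigma> * \<sigma> = 1" using s1 by (metis power2_eq_square)
    ultimately have "(\<phi> t - b) = t * \<sigma>" by (metis mult.assoc mult.right_neutral)
    thus ?thesis by (simp add: mult.commute)
  qed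
  hence "\<forall>t. c2 t = c1 (\<sigma> * t + b)" by (metis c1phi)
  with s1 show ?thesis by blast
qed

lemma graph_repr:
  fixes c :: "real \<Rightarrow> 'a"
  assumes "s0 \<noteq> s1" "a \<noteq> 0"
  shows "range (\<lambda>t. (c (a*t*(s1-s0)+s0), a*t*(y1-y0)+y0)) =
         range (\<lambda>s. (c s, ((y1-y0)/(s1-s0))* s + (y0 - ((y1-y0)/(s1-s0))* s0)))"
proof
  have ne: "s1 - s0 \<noteq> 0" using assms by simp
  show "range (\<lambda>t. (c (a*t*(s1-s0)+s0), a*t*(y1-y0)+y0)) \<subseteq>
         range (\<lambda>s. (c s, ((y1-y0)/(s1-s0))* s + (y0 - ((y1-y0)/(s1-s0))* s0)))"
  proof clarify
    fix t
    show "(c (a*t*(s1-s0)+s0), a*t*(y1-y0)+y0) \<in> range (\<lambda>s. (c s, ((y1-y0)/(s1-s0))* s + (y0 - ((y1-y0)/(s1-s0))* s0)))"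
      proof (rule range_eqI[where x="a*t*(s1-s0)+s0"])
      have "((y1-y0)/(s1-s0))*(a*t*(s1-s0)+s0) = a*t*(y1-y0) + ((y1-y0)/(s1-s0))* s0"
        using ne by (simp add: field_simps)
      thus "(c (a*t*(s1-s0)+s0), a*t*(y1-y0)+y0) = (c (a*t*(s1-s0)+s0), ((y1-y0)/(s1-s0))*(a*t*(s1-s0)+s0) + (y0 - ((y1-y0)/(s1-s0))* s0))"
        by simp
    qed
  qed
  show "range (\<lambda>s. (c s, ((y1-y0)/(s1-s0))* s + (y0 - ((y1-y0)/(s1-s0))* s0))) \<subseteq>
        range (\<lambda>t. (c (a*t*(s1-s0)+s0), a*t*(y1-y0)+y0))"
  proof clarify
    fix s
    have e1: "a*((s - s0)/(a*(s1-s0)))*(s1-s0)+s0 = s" using ne assms by (simp add: field_simps)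
    have e2: "a*((s - s0)/(a*(s1-s0)))*(y1-y0)+y0 = ((y1-y0)/(s1-s0))* s + (y0 - ((y1-y0)/(s1-s0))* s0)"
    proof -
      have "a*((s - s0)/(a*(s1-s0))) = (s-s0)/(s1-s0)" using assms by simp
      hence "a*((s - s0)/(a*(s1-s0)))*(y1-y0)+y0 = (s-s0)*((y1-y0)/(s1-s0)) + y0" by simp
      moreover have "(s-s0)*k + y0 = k * s + (y0 - k * s0)" for k :: real by (simp add: algebra_simps)
      ultimately show ?thesis by metis
    qed
    show "(c s, ((y1-y0)/(s1-s0))* s + (y0 - ((y1-y0)/(s1-s0))* s0)) \<in> range (\<lambda>t. (c (a*t*(s1-s0)+s0), a*t*(y1-y0)+y0))"
      by (rule range_eqI[where x="(s - s0)/(a*(s1-s0))"]) (simp only: e1 e2)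
  qed
qed

lemma graph_change:
  fixes \<sigma> :: real
  assumes "\<sigma>\<^sup>2 = 1" "\<forall>t. c2 t = c1 (\<sigma> * t + b)"
  shows "range (\<lambda>s. (c2 s, \<alpha> * s + \<beta>)) = range (\<lambda>u. (c1 u, (\<alpha> * \<sigma>) * u + (\<beta> - \<alpha> * \<sigma> * b)))"
proof
  have ss: "\<sigma> * \<sigma> = 1" using assms(1) by (metis power2_eq_square)
  show "range (\<lambda>s. (c2 s, \<alpha> * s + \<beta>)) \<subseteq> range (\<lambda>u. (c1 u, (\<alpha> * \<sigma>) * u + (\<beta> - \<alpha> * \<sigma> * b)))"
  proof clarify
    fix s
    have "\<alpha> * s + \<beta> = (\<alpha> * \<sigma>) * (\<sigma> * s + b) + (\<beta> - \<alpha> * \<sigma> * b)"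
      by (simp add: algebra_simps) (metis ss mult.assoc mult.left_commute mult_1_right)
    thus "(c2 s, \<alpha> * s + \<beta>) \<in> range (\<lambda>u. (c1 u, (\<alpha> * \<sigma>) * u + (\<beta> - \<alpha> * \<sigma> * b)))"
      using assms(2) by (intro range_eqI[where x="\<sigma> * s + b"]) simp
  qed
  show "range (\<lambda>u. (c1 u, (\<alpha> * \<sigma>) * u + (\<beta> - \<alpha> * \<sigma> * b))) \<subseteq> range (\<lambda>s. (c2 s, \<alpha> * s + \<beta>))"
  proof clarify
    fix u
    have e: "\<sigma> * (\<sigma> * (u - b)) + b = u" using ss by (simp add: mult.assoc[symmetric])
    have e2: "(\<alpha> * \<sigma>) * u + (\<beta> - \<alpha> * \<sigma> * b) = \<alpha> * (\<sigma> * (u - b)) + \<beta>"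
      by (simp add: algebra_simps)
    show "(c1 u, (\<alpha> * \<sigma>) * u + (\<beta> - \<alpha> * \<sigma> * b)) \<in> range (\<lambda>s. (c2 s, \<alpha> * s + \<beta>))"
      using assms(2) e e2 by (intro range_eqI[where x="\<sigma> * (u - b)"]) simp
  qed
qed

lemma iso_inj:
  fixes f :: "real \<Rightarrow> 'b" and D :: "'b \<Rightarrow> 'b \<Rightarrow> real"
  assumes "\<forall>s t. D (f t) (f s) = \<bar>t - s\<bar>" shows "inj f"
proof (rule injI)
  fix t s assume "f t = f s"
  have "\<bar>t - s\<bar> = D (f t) (f s)" using assms by simp
  also have "\<dots> = D (f t) (f t)" using \<open>f t = f s\<close> by simp
  also have "\<dots> = 0" using assms by simp
  finally show "t = s" by simp
qed

lemma graph_fst: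
  assumes "is_ruler d l c" "p \<in> range (\<lambda>s. (c s, \<alpha> * s + \<beta>))" "q \<in> range (\<lambda>s. (c s, \<alpha> * s + \<beta>))"
    "fst p = fst q"
  shows "p = q"
proof -
  obtain u where u: "p = (c u, \<alpha> * u + \<beta>)" using assms(2) by auto
  obtain v where v: "q = (c v, \<alpha> * v + \<beta>)" using assms(3) by auto
  have "c u = c v" using assms(4) u v by simp
  hence "u = v" using ruler_inj[OF assms(1)] by (simp add: inj_eq)
  thus ?thesis using u v by simp
qed

lemma graph_determined:
  assumes "is_ruler d l c"
    "p \<in> range (\<lambda>s. (c s, \<alpha> * s + \<beta>))" "q \<in> range (\<lambda>s. (c s, \<alpha> * s + \<beta>))"
    "p \<in> range (\<lambda>s. (c s, \<alpha>' * s + \<beta>'))" "q \<in> range (\<lambda>s. (c s, \<alpha>' * s + \<beta>'))"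
    "fst p \<noteq> fst q"
  shows "range (\<lambda>s. (c s, \<alpha> * s + \<beta>)) = range (\<lambda>s. (c s, \<alpha>' * s + \<beta>'))"
proof -
  have ic: "inj c" using ruler_inj[OF assms(1)] .
  obtain u where u: "p = (c u, \<alpha> * u + \<beta>)" using assms(2) by auto
  obtain v where v: "q = (c v, \<alpha> * v + \<beta>)" using assms(3) by auto
  obtain u' where u': "p = (c u', \<alpha>' * u' + \<beta>')" using assms(4) by auto
  obtain v' where v': "q = (c v', \<alpha>' * v' + \<beta>')" using assms(5) by auto
  have "u' = u" using u u' ic by (simp add: inj_eq)
  have "v' = v" using v v' ic by (simp add: inj_eq)
  have "u \<noteq> v" using u v assms(6) by auto
  have e1: "\<alpha> * u + \<beta> = \<alpha>' * u + \<beta>'" using u u' \<open>u' = u\<close> by simp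
  have e2: "\<alpha> * v + \<beta> = \<alpha>' * v + \<beta>'" using v v' \<open>v' = v\<close> by simp
  have "(\<alpha> - \<alpha>') * (u - v) = 0" using e1 e2 by (simp add: algebra_simps)
  hence "\<alpha> = \<alpha>'" using \<open>u \<noteq> v\<close> by simp
  moreover hence "\<beta> = \<beta>'" using e1 by simp
  ultimately show ?thesis by simp
qed

lemma graph_ruler:
  fixes \<alpha> \<beta> :: real
  assumes r: "is_ruler d l c"
  defines "k \<equiv> 1 / sqrt (1 + \<alpha>\<^sup>2)"
  shows "is_ruler (vext_metric d) (range (\<lambda>s. (c s, \<alpha> * s + \<beta>))) (\<lambda>t. (c (k * t), \<alpha> * (k * t) + \<beta>))"
proof -
  have pos: "sqrt (1 + \<alpha>\<^sup>2) > 0" by (simp add: add_pos_nonneg)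
  hence kpos: "k > 0" unfolding k_def by simp
  have ks: "k * sqrt (1 + \<alpha>\<^sup>2) = 1" unfolding k_def using pos by simp
  have met: "\<forall>s t. vext_metric d (c (k * t), \<alpha> * (k * t) + \<beta>) (c (k * s), \<alpha> * (k * s) + \<beta>) = \<bar>t - s\<bar>"
  proof (intro allI)
    fix s t
    have "d (c (k * t)) (c (k * s)) = \<bar>k * t - k * s\<bar>" using r unfolding is_ruler_def by simp
    hence "vext_metric d (c (k * t), \<alpha> * (k * t) + \<beta>) (c (k * s), \<alpha> * (k * s) + \<beta>)
        = sqrt ((k * t - k * s)\<^sup>2 + (\<alpha> * (k * t) + \<beta> - (\<alpha> * (k * s) + \<beta>))\<^sup>2)"
      unfolding vext_metric_def by simp
    also have "\<dots> = sqrt ((k * (t - s))\<^sup>2 * (1 + \<alpha>\<^sup>2))"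
      by (simp add: algebra_simps power2_eq_square)
    also have "\<dots> = \<bar>k * (t - s)\<bar> * sqrt (1 + \<alpha>\<^sup>2)"
      by (simp add: real_sqrt_mult)
    also have "\<dots> = \<bar>t - s\<bar> * (k * sqrt (1 + \<alpha>\<^sup>2))"
      using kpos by (simp add: abs_mult)
    also have "\<dots> = \<bar>t - s\<bar>" using ks by simp
    finally show "vext_metric d (c (k * t), \<alpha> * (k * t) + \<beta>) (c (k * s), \<alpha> * (k * s) + \<beta>) = \<bar>t - s\<bar>" .
  qed
  have inj: "inj (\<lambda>t. (c (k * t), \<alpha> * (k * t) + \<beta>))"
    by (rule iso_inj[where D="vext_metric d"]) (use met in simp)
  have rng: "range (\<lambda>t. (c (k * t), \<alpha> * (k * t) + \<beta>)) = range (\<lambda>s. (c s, \<alpha> * s + \<beta>))"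
  proof
    show "range (\<lambda>t. (c (k * t), \<alpha> * (k * t) + \<beta>)) \<subseteq> range (\<lambda>s. (c s, \<alpha> * s + \<beta>))" by auto
    show "range (\<lambda>s. (c s, \<alpha> * s + \<beta>)) \<subseteq> range (\<lambda>t. (c (k * t), \<alpha> * (k * t) + \<beta>))"
    proof clarify
      fix s
      have "k * (s / k) = s" using kpos by simp
      thus "(c s, \<alpha> * s + \<beta>) \<in> range (\<lambda>t. (c (k * t), \<alpha> * (k * t) + \<beta>))"
        by (intro range_eqI[where x="s / k"]) simp
    qed
  qed
  show ?thesis unfolding is_ruler_def bij_betw_def using inj rng met by simp
qed

lemma line_cases:
  assumes "m \<in> vext_lines X L d"
  shows "(\<exists>x0\<in>X. m = {x0} \<times> UNIV) \<or> (\<exists>l c \<alpha> \<beta>. l \<in> L \<and> is_ruler d l c \<and> m = range (\<lambda>s. (c s, \<alpha> * s + \<beta>)))"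
proof -
  obtain x0 y0 x1 y1 where x0: "x0 \<in> X" and x1: "x1 \<in> X" and H: "(if x0 \<noteq> x1 then
        (\<exists>l c s0 s1. l \<in> L \<and> x0 \<in> l \<and> x1 \<in> l \<and> is_ruler d l c \<and> c s0 = x0 \<and> c s1 = x1 \<and>
           (let a = 1 / sqrt ((s0 - s1)\<^sup>2 + (y0 - y1)\<^sup>2) in
             m = range (\<lambda>t. (c (a * t * (s1 - s0) + s0), a * t * (y1 - y0) + y0))))
      else m = {x0} \<times> (UNIV :: real set))"
    using assms unfolding vext_lines_def by blast
  show ?thesis
  proof (cases "x0 = x1")
    case True
    thus ?thesis using H x0 by auto
  next
    case False
    then obtain l c s0 s1 where l: "l \<in> L" and r: "is_ruler d l c" and c0: "c s0 = x0" and c1: "c s1 = x1"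
      and m: "m = range (\<lambda>t. (c ((1 / sqrt ((s0 - s1)\<^sup>2 + (y0 - y1)\<^sup>2)) * t * (s1 - s0) + s0),
                 (1 / sqrt ((s0 - s1)\<^sup>2 + (y0 - y1)\<^sup>2)) * t * (y1 - y0) + y0))"
      using H by (auto simp: Let_def)
    have ne: "s0 \<noteq> s1" using c0 c1 False by auto
    have "(s0 - s1)\<^sup>2 > 0" using ne by simp
    hence "sqrt ((s0 - s1)\<^sup>2 + (y0 - y1)\<^sup>2) > 0" by (simp add: add_pos_nonneg)
    hence "1 / sqrt ((s0 - s1)\<^sup>2 + (y0 - y1)\<^sup>2) > 0" by (rule divide_pos_pos[OF zero_less_one])
    hence "1 / sqrt ((s0 - s1)\<^sup>2 + (y0 - y1)\<^sup>2) \<noteq> 0" by linarith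
    from graph_repr[OF ne this, of c y1 y0] m l r show ?thesis by blast
  qed
qed

theorem lemma3:
  fixes X :: "'a set" and L :: "'a set set" and d :: "'a \<Rightarrow> 'a \<Rightarrow> real"
  assumes "reduced_BB_system X L d"
  shows "reduced_BB_system (vext_points X) (vext_lines X L d) (vext_metric d)"
proof -
  have two: "\<exists>x\<in>X. \<exists>y\<in>X. x \<noteq> y" and sub: "\<forall>l\<in>L. l \<subseteq> X"
    and uniq: "\<forall>x\<in>X. \<forall>y\<in>X. x \<noteq> y \<longrightarrow> (\<exists>!l. l \<in> L \<and> x \<in> l \<and> y \<in> l)"
    and rul: "\<forall>l\<in>L. \<exists>c. is_ruler d l c"
    using assms unfolding reduced_BB_system_def by blast+
  have dzero: "d x x = 0" if "x \<in> X" for x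
  proof -
    obtain a b where ab: "a \<in> X" "b \<in> X" "a \<noteq> b" using two by blast
    have "\<exists>y\<in>X. y \<noteq> x" using ab by (cases "a = x") auto
    then obtain y where "y \<in> X" "y \<noteq> x" by blast
    hence "\<exists>!l. l \<in> L \<and> x \<in> l \<and> y \<in> l" using uniq that by blast
    then obtain l where "l \<in> L" "x \<in> l" by blast
    then obtain c where c: "is_ruler d l c" using rul by blast
    then obtain t where "x = c t" using ruler_range[OF c] \<open>x \<in> l\<close> by blast
    thus ?thesis using c unfolding is_ruler_def by simp
  qed
  have P1: "\<exists>x\<in>vext_points X. \<exists>y\<in>vext_points X. x \<noteq> y"
  proof -
    obtain x where "x \<in> X" using two by blast
    hence "(x, 0) \<in> vext_points X" "(x, 1) \<in> vext_points X" unfolding vext_points_def by auto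
    thus ?thesis by (metis one_neq_zero prod.inject)
  qed
  have P2: "\<forall>m\<in>vext_lines X L d. m \<subseteq> vext_points X"
  proof
    fix m assume "m \<in> vext_lines X L d"
    from line_cases[OF this] show "m \<subseteq> vext_points X"
    proof
      assume "\<exists>x0\<in>X. m = {x0} \<times> UNIV" thus ?thesis unfolding vext_points_def by auto
    next
      assume "\<exists>l c \<alpha> \<beta>. l \<in> L \<and> is_ruler d l c \<and> m = range (\<lambda>s. (c s, \<alpha> * s + \<beta>))"
      then obtain l c \<alpha> \<beta> where lL: "l \<in> L" and rc: "is_ruler d l c" and meq: "m = range (\<lambda>s. (c s, \<alpha> * s + \<beta>))" by blast
      have "l \<subseteq> X" using sub lL by blast
      hence cX: "c s \<in> X" for s using ruler_range[OF rc] by blast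
      show ?thesis unfolding meq vext_points_def using cX by (simp add: image_subset_iff)
    qed
  qed
  have P4: "\<forall>m\<in>vext_lines X L d. \<exists>c. is_ruler (vext_metric d) m c"
  proof
    fix m assume "m \<in> vext_lines X L d"
    from line_cases[OF this] show "\<exists>c. is_ruler (vext_metric d) m c"
    proof
      assume "\<exists>x0\<in>X. m = {x0} \<times> UNIV"
      then obtain x0 where x0: "x0 \<in> X" "m = {x0} \<times> UNIV" by blast
      have "is_ruler (vext_metric d) m (\<lambda>t. (x0, t))"
        unfolding is_ruler_def vext_metric_def bij_betw_def using x0 dzero[OF x0(1)]
        by (auto simp: inj_on_def)
      thus ?thesis by blast
    next
      assume "\<exists>l c \<alpha> \<beta>. l \<in> L \<and> is_ruler d l c \<and> m = range (\<lambda>s. (c s, \<alpha> * s + \<beta>))"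
      then obtain l c \<alpha> \<beta> where "l \<in> L" "is_ruler d l c" "m = range (\<lambda>s. (c s, \<alpha> * s + \<beta>))" by blast
      thus ?thesis using graph_ruler[of d l c \<alpha> \<beta>] by blast
    qed
  qed
  have P3: "\<forall>p\<in>vext_points X. \<forall>q\<in>vext_points X. p \<noteq> q \<longrightarrow> (\<exists>!m. m \<in> vext_lines X L d \<and> p \<in> m \<and> q \<in> m)"
  proof (intro ballI impI)
    fix p q assume pX: "p \<in> vext_points X" and qX: "q \<in> vext_points X" and pq: "p \<noteq> q"
    obtain x0 y0 where p: "p = (x0, y0)" by force
    obtain x1 y1 where q: "q = (x1, y1)" by force
    have x0: "x0 \<in> X" and x1: "x1 \<in> X" using pX qX p q unfolding vext_points_def by auto
    have ex: "\<exists>m. m \<in> vext_lines X L d \<and> p \<in> m \<and> q \<in> m"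
    proof (cases "x0 = x1")
      case True
      have "{x0} \<times> UNIV \<in> vext_lines X L d"
        unfolding vext_lines_def using x0 x1 True pq p q by auto
      thus ?thesis using p q True by blast
    next
      case False
      have "\<exists>!l. l \<in> L \<and> x0 \<in> l \<and> x1 \<in> l" using uniq x0 x1 False by blast
      then obtain l where l: "l \<in> L" "x0 \<in> l" "x1 \<in> l" by blast
      then obtain c where c: "is_ruler d l c" using rul by blast
      obtain s0 where s0: "c s0 = x0" using ruler_range[OF c] l by blast
      obtain s1 where s1: "c s1 = x1" using ruler_range[OF c] l by blast
      define a where "a = 1 / sqrt ((s0 - s1)\<^sup>2 + (y0 - y1)\<^sup>2)"
      define m where "m = range (\<lambda>t. (c (a * t * (s1 - s0) + s0), a * t * (y1 - y0) + y0))"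
      have mL: "m \<in> vext_lines X L d"
        unfolding vext_lines_def
        apply (simp only: mem_Collect_eq)
        apply (rule exI[of _ x0], rule exI[of _ y0], rule exI[of _ x1], rule exI[of _ y1])
        apply (simp only: if_P[OF False])
        apply (rule conjI, rule x0, rule conjI, rule x1, rule conjI)
        using False apply simp
        apply (rule exI[of _ l], rule exI[of _ c], rule exI[of _ s0], rule exI[of _ s1])
        using l c s0 s1 unfolding Let_def a_def m_def by simp
      have ne: "s0 \<noteq> s1" using s0 s1 False by auto
      have "(s0 - s1)\<^sup>2 > 0" using ne by simp
      hence "sqrt ((s0 - s1)\<^sup>2 + (y0 - y1)\<^sup>2) > 0" by (simp add: add_pos_nonneg)
      hence "a > 0" unfolding a_def by (rule divide_pos_pos[OF zero_less_one])
      hence an: "a \<noteq> 0" by linarith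
      have "p \<in> m" unfolding m_def p using s0 by (intro range_eqI[where x=0]) simp
      moreover have "q \<in> m" unfolding m_def q using s1 an by (intro range_eqI[where x="1/a"]) simp
      ultimately show ?thesis using mL by blast
    qed
    have un: "m1 = m2" if m1: "m1 \<in> vext_lines X L d" "p \<in> m1" "q \<in> m1"
      and m2: "m2 \<in> vext_lines X L d" "p \<in> m2" "q \<in> m2" for m1 m2
    proof -
      have vert: "m = {x0} \<times> UNIV" if "m \<in> vext_lines X L d" "p \<in> m" "q \<in> m" "x0 = x1" for m
      proof -
        from line_cases[OF that(1)] show ?thesis
        proof
          assume "\<exists>x\<in>X. m = {x} \<times> UNIV" thus ?thesis using that p by auto
        next
          assume "\<exists>l c \<alpha> \<beta>. l \<in> L \<and> is_ruler d l c \<and> m = range (\<lambda>s. (c s, \<alpha> * s + \<beta>))"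
          then obtain l c \<alpha> \<beta> where "is_ruler d l c" "m = range (\<lambda>s. (c s, \<alpha> * s + \<beta>))" by blast
          hence "p = q" using graph_fst[of d l c p \<alpha> \<beta> q] that p q by simp
          thus ?thesis using pq by simp
        qed
      qed
      have nonvert: "\<exists>c \<alpha> \<beta>. is_ruler d l c \<and> m = range (\<lambda>s. (c s, \<alpha> * s + \<beta>))"
        if "m \<in> vext_lines X L d" "p \<in> m" "q \<in> m" "x0 \<noteq> x1" "l \<in> L" "x0 \<in> l" "x1 \<in> l" for m l
      proof -
        from line_cases[OF that(1)] show ?thesis
        proof
          assume "\<exists>x\<in>X. m = {x} \<times> UNIV" thus ?thesis using that p q by auto
        next
          assume "\<exists>l c \<alpha> \<beta>. l \<in> L \<and> is_ruler d l c \<and> m = range (\<lambda>s. (c s, \<alpha> * s + \<beta>))"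
          then obtain l' c \<alpha> \<beta> where l': "l' \<in> L" "is_ruler d l' c" "m = range (\<lambda>s. (c s, \<alpha> * s + \<beta>))" by blast
          have "x0 \<in> l'" "x1 \<in> l'" using that(2,3) l' p q ruler_range[OF l'(2)] by auto
          moreover have "\<exists>!l. l \<in> L \<and> x0 \<in> l \<and> x1 \<in> l" using uniq x0 x1 that(4) by blast
          ultimately have "l' = l" using l'(1) that(5-7) by blast
          thus ?thesis using l' by blast
        qed
      qed
      show ?thesis
      proof (cases "x0 = x1")
        case True
        thus ?thesis using vert[OF m1 True] vert[OF m2 True] by simp
      next
        case False
        have "\<exists>!l. l \<in> L \<and> x0 \<in> l \<and> x1 \<in> l" using uniq x0 x1 False by blast
      then obtain l where l: "l \<in> L" "x0 \<in> l" "x1 \<in> l" by blast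
        obtain c1 \<alpha>1 \<beta>1 where g1: "is_ruler d l c1" "m1 = range (\<lambda>s. (c1 s, \<alpha>1 * s + \<beta>1))"
          using nonvert[OF m1 False l] by blast
        obtain c2 \<alpha>2 \<beta>2 where g2: "is_ruler d l c2" "m2 = range (\<lambda>s. (c2 s, \<alpha>2 * s + \<beta>2))"
          using nonvert[OF m2 False l] by blast
        obtain \<sigma> b where sb: "\<sigma>\<^sup>2 = 1" "\<forall>t. c2 t = c1 (\<sigma> * t + b)"
          using ruler_change[OF g1(1) g2(1)] by blast
        have m2': "m2 = range (\<lambda>u. (c1 u, (\<alpha>2 * \<sigma>) * u + (\<beta>2 - \<alpha>2 * \<sigma> * b)))"
          using graph_change[OF sb] g2(2) by simp
        show ?thesis
          using graph_determined[OF g1(1), of p \<alpha>1 \<beta>1 q "\<alpha>2 * \<sigma>" "\<beta>2 - \<alpha>2 * \<sigma> * b"]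
            m1 m2 g1(2) m2' p q False by simp
      qed
    qed
    show "\<exists>!m. m \<in> vext_lines X L d \<and> p \<in> m \<and> q \<in> m"
      using ex un by blast
  qed
  show ?thesis unfolding reduced_BB_system_def using P1 P2 P3 P4 by blast
qed

end
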